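(* Let $e_1,e_2,e_3$ be nonzero integers with $e_1+e_2+e_3=0$, and let $a,b,c$ be integers with $e_1a^2+e_2b^2+e_3c^2=0$ and $a+b$, $b+c$, $c+a$ all nonzero. Then, as an identity of rational functions (indeed of polynomials) in $x,y,z$, $$(ax+by+cz)(x+y+z)-\tfrac12(a+b)(b+c)(c+a)\Bigl(\frac{x}{b+c}+\frac{y}{c+a}+\frac{z}{a+b}\Bigr)^2=\tfrac12(e_1a+e_2b+e_3c)\Bigl(\frac{x^2}{e_1}+\frac{y^2}{e_2}+\frac{z^2}{e_3}\Bigr).$$ *)

theory Defs
  imports Complex_Main
begin

end

theory Submission
  imports Defs
begin

theorem lemma2p9:
  fixes e1 e2 e3 a b c :: int and x y z :: real
  assumes "e1 \<noteq> 0" and "e2 \<noteq> 0" and "e3 \<noteq> 0"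
    and "e1 + e2 + e3 = 0"
    and "e1 * a^2 + e2 * b^2 + e3 * c^2 = 0"
    and "a + b \<noteq> 0" and "b + c \<noteq> 0" and "c + a \<noteq> 0"
  shows "(of_int a * x + of_int b * y + of_int c * z) * (x + y + z)
           - (1/2) * of_int ((a + b) * (b + c) * (c + a))
             * (x / of_int (b + c) + y / of_int (c + a) + z / of_int (a + b))^2
         = (1/2) * of_int (e1 * a + e2 * b + e3 * c)
             * (x^2 / of_int e1 + y^2 / of_int e2 + z^2 / of_int e3)"
proof -
  have i1: "-(a-b)*(a-c)*e1 = (b+c)*(e1*a+e2*b+e3*c)" using assms(4,5) by algebra
  have i2: "-(b-a)*(b-c)*e2 = (c+a)*(e1*a+e2*b+e3*c)" using assms(4,5) by algebra
  have i3: "-(c-a)*(c-b)*e3 = (a+b)*(e1*a+e2*b+e3*c)" using assms(4,5) by algebra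
  define A where "A = real_of_int a"
  define B where "B = real_of_int b"
  define C where "C = real_of_int c"
  define E1 where "E1 = real_of_int e1"
  define E2 where "E2 = real_of_int e2"
  define E3 where "E3 = real_of_int e3"
  define S where "S = E1*A+E2*B+E3*C"
  have j1: "-(A-B)*(A-C)*E1 = (B+C)*S" unfolding A_def B_def C_def E1_def E2_def E3_def S_def
    using arg_cong[OF i1, of real_of_int] by simp
  have j2: "-(B-A)*(B-C)*E2 = (C+A)*S" unfolding A_def B_def C_def E1_def E2_def E3_def S_def
    using arg_cong[OF i2, of real_of_int] by simp
  have j3: "-(C-A)*(C-B)*E3 = (A+B)*S" unfolding A_def B_def C_def E1_def E2_def E3_def S_def
    using arg_cong[OF i3, of real_of_int] by simp
  have nz: "E1 \<noteq> 0" "E2 \<noteq> 0" "E3 \<noteq> 0" "A+B \<noteq> 0" "B+C \<noteq> 0" "C+A \<noteq> 0"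
    using assms unfolding A_def B_def C_def E1_def E2_def E3_def by (simp_all flip: of_int_add)
  have L: "(A * x + B * y + C * z) * (x + y + z)
           - (1/2) * ((A + B) * (B + C) * (C + A))
             * (x / (B + C) + y / (C + A) + z / (A + B))^2
         = (-(A-B)*(A-C)/(2*(B+C)))*x^2 + (-(B-A)*(B-C)/(2*(C+A)))*y^2 + (-(C-A)*(C-B)/(2*(A+B)))*z^2"
  proof -
    define u where "u = 1/(B+C)"
    define v where "v = 1/(C+A)"
    define w where "w = 1/(A+B)"
    have hu: "u*(B+C) = 1" and hv: "v*(C+A) = 1" and hw: "w*(A+B) = 1"
      using nz unfolding u_def v_def w_def by simp_all
    have e: "x / (B + C) = x*u" "y / (C + A) = y*v" "z / (A + B) = z*w"
      "-(A-B)*(A-C)/(2*(B+C)) = -(A-B)*(A-C)*u/2"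
      "-(B-A)*(B-C)/(2*(C+A)) = -(B-A)*(B-C)*v/2"
      "-(C-A)*(C-B)/(2*(A+B)) = -(C-A)*(C-B)*w/2"
      unfolding u_def v_def w_def by simp_all
    show ?thesis unfolding e using hu hv hw by algebra
  qed
  have k1: "-(A-B)*(A-C)/(2*(B+C)) = S/(2*E1)" using j1 nz by (simp add: field_simps)
  have k2: "-(B-A)*(B-C)/(2*(C+A)) = S/(2*E2)" using j2 nz by (simp add: field_simps)
  have k3: "-(C-A)*(C-B)/(2*(A+B)) = S/(2*E3)" using j3 nz by (simp add: field_simps)
  have R: "(A * x + B * y + C * z) * (x + y + z)
           - (1/2) * ((A + B) * (B + C) * (C + A))
             * (x / (B + C) + y / (C + A) + z / (A + B))^2
         = (1/2) * S * (x^2 / E1 + y^2 / E2 + z^2 / E3)"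
    unfolding L k1 k2 k3 by (simp add: field_simps)
  then show ?thesis unfolding A_def B_def C_def E1_def E2_def E3_def S_def by simp
qed

end
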